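(* Let $k\ge 3$ be an integer and let $G\in\mathcal{F}_v(k-1,k-1;k)$ with $|V(G)|=F_v(k-1,k-1;k)$. Let $f(G)$ be the largest number of vertices of a $K_{k-1}$-free induced subgraph of $G$. Then $$F_v(J_k,J_k;k)\le 3F_v(k-1,k-1;k)-f(G).$$
   Context: All graphs are finite and simple. $J_n$ denotes $K_n$ with one edge removed. An integer $a$ used in place of a graph denotes $K_a$. "A graph $F$ contains $H$" means $F$ has a (not necessarily induced) subgraph isomorphic to $H$. $G\rightarrow(H_1,H_2)^v$ means: for every partition $V(G)=X_1\cup X_2$ there is $i$ such that the subgraph induced by $X_i$ contains $H_i$. $\mathcal{F}_v(H_1,H_2;k)$ is the set of $K_k$-free graphs $G$ with $G\rightarrow(H_1,H_2)^v$, and $F_v(H_1,H_2;k)$ is the minimum number of vertices of a graph in this set. *)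

theory Defs
  imports Main
begin

type_synonym 'a graph = "'a set \<times> 'a set set"

definition verts :: "'a graph \<Rightarrow> 'a set" where "verts G = fst G"
definition edges :: "'a graph \<Rightarrow> 'a set set" where "edges G = snd G"

definition wf_graph :: "'a graph \<Rightarrow> bool" where
  "wf_graph G \<longleftrightarrow> finite (verts G) \<and>
     (\<forall>e\<in>edges G. \<exists>u v. u \<noteq> v \<and> u \<in> verts G \<and> v \<in> verts G \<and> e = {u, v})"

definition contains :: "'a graph \<Rightarrow> 'b graph \<Rightarrow> bool" where
  "contains F H \<longleftrightarrow> (\<exists>f. inj_on f (verts H) \<and> f ` verts H \<subseteq> verts F \<and>
     (\<forall>e\<in>edges H. f ` e \<in> edges F))"

definition induced :: "'a graph \<Rightarrow> 'a set \<Rightarrow> 'a graph" where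
  "induced G X = (X \<inter> verts G, {e \<in> edges G. e \<subseteq> X})"

definition complete :: "nat \<Rightarrow> nat graph" where
  "complete a = ({0..<a}, {{i, j} | i j. i < a \<and> j < a \<and> i \<noteq> j})"

definition J :: "nat \<Rightarrow> nat graph" where
  "J n = ({0..<n}, {{i, j} | i j. i < n \<and> j < n \<and> i \<noteq> j} - {{0, 1}})"

definition vertex_arrows :: "'a graph \<Rightarrow> 'b graph \<Rightarrow> 'c graph \<Rightarrow> bool" where
  "vertex_arrows G H1 H2 \<longleftrightarrow> (\<forall>X1 X2. X1 \<union> X2 = verts G \<and> X1 \<inter> X2 = {} \<longrightarrow>
      contains (induced G X1) H1 \<or> contains (induced G X2) H2)"

definition Kfree :: "'a graph \<Rightarrow> nat \<Rightarrow> bool" where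
  "Kfree G k \<longleftrightarrow> \<not> contains G (complete k)"

text \<open>The class F_v(H1,H2;k); graphs are taken with vertices in nat (every finite
  graph is isomorphic to one of these).\<close>
definition Fv_class :: "'b graph \<Rightarrow> 'c graph \<Rightarrow> nat \<Rightarrow> nat graph set" where
  "Fv_class H1 H2 k = {G. wf_graph G \<and> Kfree G k \<and> vertex_arrows G H1 H2}"

definition Fv :: "'b graph \<Rightarrow> 'c graph \<Rightarrow> nat \<Rightarrow> nat" where
  "Fv H1 H2 k = (LEAST n. \<exists>G \<in> Fv_class H1 H2 k. card (verts G) = n)"

definition fG :: "'a graph \<Rightarrow> nat \<Rightarrow> nat" where
  "fG G k = Max {card X | X. X \<subseteq> verts G \<and> Kfree (induced G X) (k - 1)}"

end

theory Submission
  imports Defs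
begin

lemma contains_complete:
  "contains F (complete n) \<longleftrightarrow> (\<exists>f. inj_on f {0..<n} \<and> f ` {0..<n} \<subseteq> verts F \<and>
      (\<forall>i j. i<n \<longrightarrow> j<n \<longrightarrow> i\<noteq>j \<longrightarrow> {f i, f j} \<in> edges F))"
proof
  assume "contains F (complete n)"
  then obtain f where f: "inj_on f {0..<n}" "f ` {0..<n} \<subseteq> verts F"
    "\<forall>e\<in>edges (complete n). f ` e \<in> edges F"
    unfolding contains_def complete_def verts_def by auto
  have "\<forall>i j. i<n \<longrightarrow> j<n \<longrightarrow> i\<noteq>j \<longrightarrow> {f i, f j} \<in> edges F"
  proof (intro allI impI)
    fix i j assume "i<n" "j<n" "i\<noteq>j"
    then have "{i,j} \<in> edges (complete n)" unfolding complete_def edges_def by auto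
    then show "{f i, f j} \<in> edges F" using f(3) by force
  qed
  then show "\<exists>f. inj_on f {0..<n} \<and> f ` {0..<n} \<subseteq> verts F \<and>
      (\<forall>i j. i<n \<longrightarrow> j<n \<longrightarrow> i\<noteq>j \<longrightarrow> {f i, f j} \<in> edges F)" using f by blast
next
  assume "\<exists>f. inj_on f {0..<n} \<and> f ` {0..<n} \<subseteq> verts F \<and>
      (\<forall>i j. i<n \<longrightarrow> j<n \<longrightarrow> i\<noteq>j \<longrightarrow> {f i, f j} \<in> edges F)"
  then obtain f where f: "inj_on f {0..<n}" "f ` {0..<n} \<subseteq> verts F"
      "\<forall>i j. i<n \<longrightarrow> j<n \<longrightarrow> i\<noteq>j \<longrightarrow> {f i, f j} \<in> edges F" by blast
  have "\<forall>e\<in>edges (complete n). f ` e \<in> edges F"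
    using f(3) unfolding complete_def edges_def by auto
  moreover have "verts (complete n) = {0..<n}" unfolding complete_def verts_def by simp
  ultimately show "contains F (complete n)" unfolding contains_def using f by metis
qed

lemma wf_edge_ne: "wf_graph G \<Longrightarrow> {a,b} \<in> edges G \<Longrightarrow> a \<noteq> b"
proof
  assume w: "wf_graph G" and e: "{a,b} \<in> edges G" and ab: "a = b"
  from w e obtain u v where uv: "u \<noteq> v" "{a,b} = {u,v}" unfolding wf_graph_def by blast
  have "u \<in> {a,b}" "v \<in> {a,b}" using uv(2) by auto
  then show False using ab uv(1) by auto
qed

lemma hom_clique:
  assumes "wf_graph G" "\<forall>x\<in>verts F. \<pi> x \<in> verts G"
    "\<forall>x y. {x,y} \<in> edges F \<longrightarrow> {\<pi> x, \<pi> y} \<in> edges G"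
    "contains F (complete n)"
  shows "contains G (complete n)"
proof -
  from assms(4) obtain f where f: "inj_on f {0..<n}" "f ` {0..<n} \<subseteq> verts F"
      "\<forall>i j. i<n \<longrightarrow> j<n \<longrightarrow> i\<noteq>j \<longrightarrow> {f i, f j} \<in> edges F"
    unfolding contains_complete by blast
  have e: "\<forall>i j. i<n \<longrightarrow> j<n \<longrightarrow> i\<noteq>j \<longrightarrow> {\<pi> (f i), \<pi> (f j)} \<in> edges G"
    using f(3) assms(3) by blast
  have "inj_on (\<pi> \<circ> f) {0..<n}"
  proof (rule inj_onI)
    fix i j assume ij: "i \<in> {0..<n}" "j \<in> {0..<n}" "(\<pi> \<circ> f) i = (\<pi> \<circ> f) j"
    show "i = j"
    proof (rule ccontr)
      assume "i \<noteq> j"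
      then have "{\<pi> (f i), \<pi> (f j)} \<in> edges G" using e ij(1,2) by auto
      then have "\<pi> (f i) \<noteq> \<pi> (f j)" by (rule wf_edge_ne[OF assms(1)])
      then show False using ij(3) by simp
    qed
  qed
  moreover have "(\<pi> \<circ> f) ` {0..<n} \<subseteq> verts G" using f(2) assms(2) by auto
  ultimately show ?thesis unfolding contains_complete using e
    by (intro exI[of _ "\<pi> \<circ> f"]) auto
qed

lemma J_embed:
  fixes g :: "nat \<Rightarrow> 'a" and h :: "nat \<Rightarrow> 'b" and \<pi> :: "'b \<Rightarrow> 'a"
  assumes k: "k \<ge> 3" and ginj: "inj_on g {0..<k-1}" and u0: "u0 < k-1"
    and ab: "a \<noteq> b" "a \<in> S" "b \<in> S" "\<pi> a = g u0" "\<pi> b = g u0"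
    and h: "\<forall>i<k-1. h i \<in> S \<and> \<pi> (h i) = g i"
    and R: "\<forall>i j. i<k-1 \<longrightarrow> j<k-1 \<longrightarrow> i\<noteq>j \<longrightarrow> R (g i) (g j)"
    and RE: "\<forall>x y. x\<in>S \<longrightarrow> y\<in>S \<longrightarrow> R (\<pi> x) (\<pi> y) \<longrightarrow> {x,y} \<in> edges F"
    and SV: "S \<subseteq> verts F"
  shows "contains F (J k)"
proof -
  define \<tau> where "\<tau> j = (if j < 2 then u0 else if j - 2 < u0 then j - 2 else j - 1)" for j :: nat
  define \<phi> where "\<phi> j = (if j = 0 then a else if j = 1 then b else h (\<tau> j))" for j
  have \<tau>lt: "\<tau> j < k-1" if "j<k" for j using that k u0 unfolding \<tau>_def by auto
  have \<tau>ne: "\<tau> i \<noteq> \<tau> j" if "i<k" "j<k" "i\<noteq>j" "\<not>(i<2 \<and> j<2)" for i j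
    using that u0 unfolding \<tau>_def by auto
  have \<phi>S: "\<phi> j \<in> S" if "j<k" for j using that h \<tau>lt ab unfolding \<phi>_def by auto
  have \<phi>\<pi>: "\<pi> (\<phi> j) = g (\<tau> j)" if "j<k" for j using that h \<tau>lt ab unfolding \<phi>_def \<tau>_def
    by auto
  have gne: "g (\<tau> i) \<noteq> g (\<tau> j)" if "i<k" "j<k" "i\<noteq>j" "\<not>(i<2 \<and> j<2)" for i j
    using \<tau>ne[OF that] \<tau>lt that ginj unfolding inj_on_def by auto
  have inj: "inj_on \<phi> {0..<k}"
  proof (rule inj_onI)
    fix i j assume i: "i \<in> {0..<k}" and j: "j \<in> {0..<k}" and eq: "\<phi> i = \<phi> j"
    show "i = j"
    proof (rule ccontr)
      assume ne: "i \<noteq> j"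
      show False
      proof (cases "i<2 \<and> j<2")
        case True
        then have "\<phi> i \<noteq> \<phi> j" using ne ab(1) unfolding \<phi>_def by auto
        then show False using eq by simp
      next
        case False
        then show False using gne[of i j] i j ne eq \<phi>\<pi>[of i] \<phi>\<pi>[of j] by auto
      qed
    qed
  qed
  have img: "\<phi> ` {0..<k} \<subseteq> verts F" using \<phi>S SV by auto
  have edg: "\<phi> ` e \<in> edges F" if "e \<in> edges (J k)" for e
  proof -
    have e1: "e \<in> {{i,j}|i j. i<k \<and> j<k \<and> i\<noteq>j}" "e \<noteq> {0,1}"
      using that unfolding J_def edges_def by auto
    from e1(1) obtain i j where e0: "e = {i,j}" "i<k" "j<k" "i\<noteq>j" by blast
    with e1(2) have e: "e = {i,j}" "i<k" "j<k" "i\<noteq>j" "{i,j} \<noteq> {0,1}" by auto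
    have n2: "\<not>(i<2 \<and> j<2)" using e by (auto simp: doubleton_eq_iff)
    have "\<tau> i < k-1" "\<tau> j < k-1" using \<tau>lt e by auto
    then have "R (g (\<tau> i)) (g (\<tau> j))" using R \<tau>ne[OF e(2,3,4) n2] by blast
    then have "R (\<pi> (\<phi> i)) (\<pi> (\<phi> j))" using \<phi>\<pi> e by simp
    then have "{\<phi> i, \<phi> j} \<in> edges F" using RE \<phi>S e by blast
    then show ?thesis using e by simp
  qed
  have vJ: "verts (J k) = {0..<k}" unfolding J_def verts_def by simp
  show ?thesis unfolding contains_def vJ using inj img edg by blast
qed

lemma verts_induced[simp]: "verts (induced G X) = X \<inter> verts G"
  unfolding induced_def verts_def by simp

lemma edges_induced[simp]: "edges (induced G X) = {e \<in> edges G. e \<subseteq> X}"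
  unfolding induced_def edges_def by simp

lemma three_copies:
  fixes v :: nat
  assumes "3*v \<in> X1 \<or> 3*v \<in> X2" "3*v+1 \<in> X1 \<or> 3*v+1 \<in> X2" "3*v+2 \<in> X1 \<or> 3*v+2 \<in> X2"
    and "\<not>(\<exists>x\<in>X1. \<exists>y\<in>X1. x\<noteq>y \<and> x div 3 = v \<and> y div 3 = v)"
  shows "\<exists>x\<in>X2. \<exists>y\<in>X2. x\<noteq>y \<and> x div 3 = v \<and> y div 3 = v"
proof -
  have d: "(3*v) div 3 = v" "(3*v+1) div 3 = v" "(3*v+2) div 3 = v" by auto
  have n: "3*v \<noteq> 3*v+1" "3*v \<noteq> 3*v+2" "3*v+1 \<noteq> 3*v+2" by auto
  show ?thesis
  proof (cases "3*v \<in> X1")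
    case True
    then have "3*v+1 \<notin> X1" "3*v+2 \<notin> X1" using assms(4) d n by metis+
    then show ?thesis using assms(2,3) d n by metis
  next
    case False
    then have "3*v \<in> X2" using assms(1) by auto
    moreover have "3*v+1 \<notin> X1 \<or> 3*v+2 \<notin> X1" using assms(4) d n by metis
    ultimately show ?thesis using assms(2,3) d n by metis
  qed
qed

lemma two_copies:
  fixes v :: nat
  assumes "3*v \<in> X1 \<or> 3*v \<in> X2" "3*v+1 \<in> X1 \<or> 3*v+1 \<in> X2"
    and "\<not>(\<exists>x\<in>X2. \<exists>y\<in>X2. x\<noteq>y \<and> x div 3 = v \<and> y div 3 = v)"
  shows "\<exists>x\<in>X1. x div 3 = v"
proof -
  have d: "(3*v) div 3 = v" "(3*v+1) div 3 = v" by auto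
  have n: "3*v \<noteq> 3*v+1" by auto
  show ?thesis using assms d n by metis
qed

theorem mainTheorem6:
  fixes k :: nat and G :: "nat graph"
  assumes "k \<ge> 3"
    and "G \<in> Fv_class (complete (k - 1)) (complete (k - 1)) k"
    and "card (verts G) = Fv (complete (k - 1)) (complete (k - 1)) k"
  shows "Fv_class (J k) (J k) k \<noteq> {} \<and>
         Fv (J k) (J k) k \<le> 3 * Fv (complete (k - 1)) (complete (k - 1)) k - fG G k"
proof -
  let ?K = "complete (k-1)"
  define V where "V = verts G"
  define E where "E = edges G"
  have wfG: "wf_graph G" and KG: "Kfree G k" and arG: "vertex_arrows G ?K ?K"
    using assms(2) unfolding Fv_class_def by auto
  have finV: "finite V" using wfG unfolding wf_graph_def V_def by auto
  have k1: "0 < k - 1" using assms(1) by auto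
  define Sf where "Sf = {card X | X. X \<subseteq> verts G \<and> Kfree (induced G X) (k - 1)}"
  have "Sf \<subseteq> {..card V}" unfolding Sf_def V_def using card_mono finV V_def by auto
  then have finS: "finite Sf" using finite_subset by blast
  have "Kfree (induced G {}) (k-1)"
    unfolding Kfree_def contains_complete using k1 by auto
  then have "0 \<in> Sf" unfolding Sf_def by force
  then have "Max Sf \<in> Sf" using finS Max_in by blast
  then obtain A where A: "A \<subseteq> V" "Kfree (induced G A) (k-1)" "card A = fG G k"
    unfolding Sf_def fG_def V_def by auto
  define m where "m v = (if v \<in> A then 2 else 3::nat)" for v
  have m3: "m v \<le> 3" for v unfolding m_def by auto
  define VH where "VH = {x. x div 3 \<in> V \<and> x mod 3 < m (x div 3)}"
  define EH where "EH = {{x,y} | x y. x\<in>VH \<and> y\<in>VH \<and> {x div 3, y div 3} \<in> E}"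
  define H where "H = (VH, EH)"
  have vH: "verts H = VH" and eH: "edges H = EH" unfolding H_def verts_def edges_def by auto
  have memVH: "3*v+i \<in> VH \<longleftrightarrow> v \<in> V \<and> i < m v" if "i < 3" for v i
    using that unfolding VH_def by auto
  have VHsub: "VH \<subseteq> (\<lambda>p. 3 * fst p + snd p) ` (V \<times> {0..<3})"
  proof
    fix x assume "x \<in> VH"
    then have "(x div 3, x mod 3) \<in> V \<times> {0..<3}" unfolding VH_def by auto
    moreover have "x = 3 * fst (x div 3, x mod 3) + snd (x div 3, x mod 3)" by simp
    ultimately show "x \<in> (\<lambda>p. 3 * fst p + snd p) ` (V \<times> {0..<3})" by blast
  qed
  have finVH: "finite VH" using finite_subset[OF VHsub] finV by blast
  have EHE: "{x div 3, y div 3} \<in> E" if "{x,y} \<in> EH" for x y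
  proof -
    from that obtain x' y' where "{x,y} = {x',y'}" "{x' div 3, y' div 3} \<in> E"
      unfolding EH_def by auto
    then show ?thesis by (auto simp: doubleton_eq_iff insert_commute)
  qed
  have wfH: "wf_graph H"
    unfolding wf_graph_def vH eH
  proof (intro conjI finVH ballI)
    fix e assume "e \<in> EH"
    then obtain x y where e: "e = {x,y}" "x\<in>VH" "y\<in>VH" "{x div 3, y div 3} \<in> E"
      unfolding EH_def by auto
    then have "x div 3 \<noteq> y div 3" using wf_edge_ne[OF wfG] E_def by auto
    then have "x \<noteq> y" by auto
    then show "\<exists>u v. u \<noteq> v \<and> u \<in> VH \<and> v \<in> VH \<and> e = {u, v}" using e by auto
  qed
  have bij: "bij_betw (\<lambda>x. (x div 3, x mod 3)) VH (SIGMA v:V. {0..<m v})"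
  proof (rule bij_betw_byWitness[where f'="\<lambda>p. 3 * fst p + snd p"])
    show "\<forall>a\<in>VH. 3 * fst (a div 3, a mod 3) + snd (a div 3, a mod 3) = a" by simp
    show "\<forall>a'\<in>SIGMA v:V. {0..<m v}. ((3 * fst a' + snd a') div 3, (3 * fst a' + snd a') mod 3) = a'"
    proof
      fix p assume "p \<in> (SIGMA v:V. {0..<m v})"
      then have "snd p < 3" using m3[of "fst p"] by auto
      then show "((3 * fst p + snd p) div 3, (3 * fst p + snd p) mod 3) = p" by (cases p) auto
    qed
    show "(\<lambda>x. (x div 3, x mod 3)) ` VH \<subseteq> (SIGMA v:V. {0..<m v})" unfolding VH_def by auto
    show "(\<lambda>p. 3 * fst p + snd p) ` (SIGMA v:V. {0..<m v}) \<subseteq> VH"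
    proof
      fix x assume "x \<in> (\<lambda>p. 3 * fst p + snd p) ` (SIGMA v:V. {0..<m v})"
      then obtain v i where "v \<in> V" "i < m v" "x = 3*v+i" by auto
      then show "x \<in> VH" using memVH[of i v] m3[of v] by auto
    qed
  qed
  have "card VH = card (SIGMA v:V. {0..<m v})" using bij_betw_same_card[OF bij] .
  also have "\<dots> = sum m V" using finV by simp
  also have "\<dots> = sum m A + sum m (V - A)" using sum.subset_diff[OF A(1) finV, of m] by simp
  also have "\<dots> = 2 * card A + 3 * card (V - A)" unfolding m_def by simp
  also have "\<dots> = 3 * card V - card A"
    using card_Diff_subset[OF finite_subset[OF A(1) finV] A(1)] card_mono[OF finV A(1)] by simp
  finally have cardVH: "card VH = 3 * card V - card A" .
  have KH: "Kfree H k"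
    unfolding Kfree_def
  proof
    assume c: "contains H (complete k)"
    have "contains G (complete k)"
      by (rule hom_clique[OF wfG _ _ c, where \<pi>="\<lambda>x. x div 3"])
         (use EHE in \<open>auto simp: vH eH VH_def V_def E_def\<close>)
    then show False using KG unfolding Kfree_def by blast
  qed
  have arH: "vertex_arrows H (J k) (J k)"
    unfolding vertex_arrows_def
  proof (intro allI impI)
    fix X1 X2 assume X: "X1 \<union> X2 = verts H \<and> X1 \<inter> X2 = {}"
    then have X1s: "X1 \<subseteq> VH" and X2s: "X2 \<subseteq> VH" using vH by auto
    have cov: "3*v+i \<in> X1 \<or> 3*v+i \<in> X2" if "v \<in> V" "i < m v" for v i
      using that X vH memVH[of i v] m3[of v] by auto
    define good where "good X v = (\<exists>x\<in>X. \<exists>y\<in>X. x\<noteq>y \<and> x div 3 = v \<and> y div 3 = v)" for X and v::nat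
    define has where "has X v = (\<exists>x\<in>X. x div 3 = v)" for X and v::nat
    have key: "contains (induced H X) (J k)"
      if XV: "X \<subseteq> VH" and gi: "inj_on g {0..<k-1}"
        and ge: "\<forall>i j. i<k-1 \<longrightarrow> j<k-1 \<longrightarrow> i\<noteq>j \<longrightarrow> {g i, g j} \<in> E"
        and gh: "\<forall>i<k-1. has X (g i)" and u0: "u0 < k-1" and gd: "good X (g u0)" for X g u0
    proof -
      from gd obtain a b where ab: "a \<in> X" "b \<in> X" "a \<noteq> b" "a div 3 = g u0" "b div 3 = g u0"
        unfolding good_def by blast
      have "\<forall>i. \<exists>x. i<k-1 \<longrightarrow> x \<in> X \<and> x div 3 = g i" using gh unfolding has_def by blast
      then obtain h where h: "\<forall>i. i<k-1 \<longrightarrow> h i \<in> X \<and> h i div 3 = g i" by (rule choice[THEN exE])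
      have RE: "\<forall>x y. x \<in> X \<longrightarrow> y \<in> X \<longrightarrow> {x div 3, y div 3} \<in> E \<longrightarrow> {x, y} \<in> edges (induced H X)"
        using XV unfolding edges_induced eH EH_def by blast
      have SV: "X \<subseteq> verts (induced H X)" using XV vH by auto
      have h': "\<forall>i<k-1. h i \<in> X \<and> h i div 3 = g i" using h by blast
      show ?thesis
        by (rule J_embed[where R="\<lambda>u v. {u,v} \<in> E" and \<pi>="\<lambda>x. x div 3",
              OF assms(1) gi u0 ab(3) ab(1) ab(2) ab(4) ab(5) h' ge RE SV])
    qed
    define Y1 where "Y1 = {v\<in>V. good X1 v \<or> (v \<in> A \<and> \<not> good X2 v)}"
    define Y2 where "Y2 = V - Y1"
    have "Y1 \<union> Y2 = verts G \<and> Y1 \<inter> Y2 = {}" unfolding Y1_def Y2_def V_def by auto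
    then have "contains (induced G Y1) ?K \<or> contains (induced G Y2) ?K"
      using arG unfolding vertex_arrows_def by blast
    then show "contains (induced H X1) (J k) \<or> contains (induced H X2) (J k)"
    proof
      assume "contains (induced G Y1) ?K"
      then obtain g where g: "inj_on g {0..<k-1}" "g ` {0..<k-1} \<subseteq> Y1 \<inter> V"
          "\<forall>i j. i<k-1 \<longrightarrow> j<k-1 \<longrightarrow> i\<noteq>j \<longrightarrow> {g i, g j} \<in> E \<and> {g i, g j} \<subseteq> Y1"
        unfolding contains_complete V_def E_def by auto
      have hs: "has X1 (g i)" if "i < k-1" for i
      proof -
        have gi: "g i \<in> Y1" "g i \<in> V" using g(2) that by auto
        show ?thesis
        proof (cases "good X1 (g i)")
          case True then show ?thesis unfolding good_def has_def by auto
        next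
          case False
          then have "g i \<in> A" "\<not> good X2 (g i)" using gi unfolding Y1_def by auto
          then have m: "m (g i) = 2" unfolding m_def by simp
          have c: "3 * g i + 0 \<in> X1 \<or> 3 * g i + 0 \<in> X2" "3 * g i + 1 \<in> X1 \<or> 3 * g i + 1 \<in> X2"
            using cov[OF gi(2), of 0] cov[OF gi(2), of 1] m by simp_all
          have "\<not> good X2 (g i)" using \<open>\<not> good X2 (g i)\<close> .
          then show ?thesis using two_copies[OF c(1)[simplified] c(2)]
            unfolding has_def good_def by blast
        qed
      qed
      have "\<exists>u0<k-1. g u0 \<notin> A"
      proof (rule ccontr)
        assume "\<not> (\<exists>u0<k-1. g u0 \<notin> A)"
        then have "contains (induced G A) ?K"
          unfolding contains_complete using g A(1) unfolding V_def E_def by auto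
        then show False using A(2) unfolding Kfree_def by blast
      qed
      then obtain u0 where u0: "u0 < k-1" "g u0 \<notin> A" by blast
      have "g u0 \<in> Y1" using u0(1) g(2) by auto
      then have "good X1 (g u0)" using u0(2) unfolding Y1_def by auto
      moreover have e: "\<forall>i j. i<k-1 \<longrightarrow> j<k-1 \<longrightarrow> i\<noteq>j \<longrightarrow> {g i, g j} \<in> E" using g(3) by blast
      moreover have "\<forall>i<k-1. has X1 (g i)" using hs by blast
      ultimately have "contains (induced H X1) (J k)"
        using key[OF X1s g(1) _ _ u0(1)] by blast
      then show ?thesis by blast
    next
      assume "contains (induced G Y2) ?K"
      then obtain g where g: "inj_on g {0..<k-1}" "g ` {0..<k-1} \<subseteq> Y2 \<inter> V"
          "\<forall>i j. i<k-1 \<longrightarrow> j<k-1 \<longrightarrow> i\<noteq>j \<longrightarrow> {g i, g j} \<in> E \<and> {g i, g j} \<subseteq> Y2"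
        unfolding contains_complete V_def E_def by auto
      have gd: "good X2 (g i)" if "i < k-1" for i
      proof -
        have gi: "g i \<in> V" "\<not> good X1 (g i)" "\<not> (g i \<in> A \<and> \<not> good X2 (g i))"
        proof -
          have "g i \<in> Y2" using g(2) that by auto
          then show "g i \<in> V" "\<not> good X1 (g i)" "\<not> (g i \<in> A \<and> \<not> good X2 (g i))"
            unfolding Y2_def Y1_def by auto
        qed
        show ?thesis
        proof (cases "g i \<in> A")
          case True then show ?thesis using gi by auto
        next
          case False
          then have m: "m (g i) = 3" unfolding m_def by simp
          have c: "3 * g i + 0 \<in> X1 \<or> 3 * g i + 0 \<in> X2" "3 * g i + 1 \<in> X1 \<or> 3 * g i + 1 \<in> X2"
            "3 * g i + 2 \<in> X1 \<or> 3 * g i + 2 \<in> X2"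
            using cov[OF gi(1), of 0] cov[OF gi(1), of 1] cov[OF gi(1), of 2] m by simp_all
          show ?thesis using three_copies[OF c(1)[simplified] c(2) c(3)] gi(2)
            unfolding good_def by blast
        qed
      qed
      have e: "\<forall>i j. i<k-1 \<longrightarrow> j<k-1 \<longrightarrow> i\<noteq>j \<longrightarrow> {g i, g j} \<in> E" using g(3) by blast
      have hs: "\<forall>i<k-1. has X2 (g i)" using gd unfolding has_def good_def by blast
      have "contains (induced H X2) (J k)"
        using key[OF X2s g(1) e hs k1 gd[OF k1]] .
      then show ?thesis by blast
    qed
  qed
  have HF: "H \<in> Fv_class (J k) (J k) k" unfolding Fv_class_def using wfH KH arH by auto
  have "Fv (J k) (J k) k \<le> card (verts H)"
    unfolding Fv_def by (rule Least_le) (use HF in blast)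
  then show ?thesis using HF cardVH vH assms(3) A(3) V_def by auto
qed

end
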